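(* Let $\gamma<0$, $1\le p<\infty$, and let $L^p_\gamma(\mathbb{R})=L^p(\mathbb{R},(1+e^x)^\gamma dx)$. For every nonnegative $f\in L^p_\gamma(\mathbb{R})$, $$\liminf_{h\to-\infty}\|f+\tau_hf\|_{L^p_\gamma(\mathbb{R})}\ge2^{1/p}\|f\|_{L^p_\gamma(\mathbb{R})},$$ where $\tau_hf(x)=f(x-h)$. *)

theory Defs
  imports "HOL-Analysis.Analysis"
begin

definition lp_weight :: "real \<Rightarrow> real \<Rightarrow> real" where
  "lp_weight \<gamma> x = (1 + exp x) powr \<gamma>"

definition wLp_integral :: "real \<Rightarrow> real \<Rightarrow> (real \<Rightarrow> real) \<Rightarrow> ennreal" where
  "wLp_integral \<gamma> p f = (\<integral>\<^sup>+ x. ennreal (\<bar>f x\<bar> powr p * lp_weight \<gamma> x) \<partial>lebesgue)"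

definition wLp_norm :: "real \<Rightarrow> real \<Rightarrow> (real \<Rightarrow> real) \<Rightarrow> ereal" where
  "wLp_norm \<gamma> p f =
     (if wLp_integral \<gamma> p f = \<infinity> then \<infinity>
      else ereal (enn2real (wLp_integral \<gamma> p f) powr (1 / p)))"

definition transl :: "real \<Rightarrow> (real \<Rightarrow> real) \<Rightarrow> real \<Rightarrow> real" where
  "transl h f x = f (x - h)"

end

theory Submission
  imports Defs
begin

lemma powr_le_self_aux:
  fixes t p :: real assumes "0 \<le> t" "t \<le> 1" "1 \<le> p" shows "t powr p \<le> t"
  by (metis assms(1,2,3) powr_mono' powr_one_gt_zero_iff)

lemma powr_superadd:
  fixes a b p :: real assumes a: "0 \<le> a" and b: "0 \<le> b" and p: "1 \<le> p"
  shows "a powr p + b powr p \<le> (a + b) powr p"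
proof (cases "a + b = 0")
  case True
  then have "a = 0" "b = 0" using a b by auto
  then show ?thesis by simp
next
  case False
  define s where "s = a + b"
  have s: "s > 0" using False a b s_def by auto
  have "a powr p = (s * (a/s)) powr p" using s by simp
  also have "\<dots> = s powr p * (a/s) powr p" using s a powr_mult[of s "a/s" p] by simp
  also have "\<dots> \<le> s powr p * (a/s)"
    using powr_le_self_aux[of "a/s" p] s a b p s_def by (intro mult_left_mono) auto
  finally have A: "a powr p \<le> s powr p * (a/s)" .
  have "b powr p = (s * (b/s)) powr p" using s by simp
  also have "\<dots> = s powr p * (b/s) powr p" using s b powr_mult[of s "b/s" p] by simp
  also have "\<dots> \<le> s powr p * (b/s)"
    using powr_le_self_aux[of "b/s" p] s a b p s_def by (intro mult_left_mono) auto
  finally have B: "b powr p \<le> s powr p * (b/s)" .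
  have "s powr p * (a/s) + s powr p * (b/s) = s powr p * ((a + b)/s)"
    by (simp add: add_divide_distrib distrib_left)
  also have "\<dots> = s powr p" using s s_def by simp
  finally have "a powr p + b powr p \<le> s powr p" using A B by linarith
  then show ?thesis using s_def by simp
qed

lemma weight_anti:
  fixes x y g::real assumes "g<0" "x \<le> y" shows "lp_weight g y \<le> lp_weight g x"
  unfolding lp_weight_def
  by (smt (verit, ccfv_threshold) assms(1,2) exp_gt_zero exp_mono powr_less_mono2_neg)

lemma weight_pos: "lp_weight g x > 0"
  unfolding lp_weight_def by (smt (verit) exp_gt_zero powr_gt_zero)

lemma weight_meas: "lp_weight g \<in> borel_measurable lebesgue"
proof -
  have "continuous_on UNIV (lp_weight g)" unfolding lp_weight_def
    by (intro continuous_intros) (auto, smt (verit) exp_gt_zero)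
  then have "lp_weight g \<in> borel_measurable borel"
    using borel_measurable_continuous_onI by blast
  then show ?thesis by (metis measurable_lborel2 measurable_completion sets_lborel)
qed

lemma shift_meas: "(\<lambda>x::real. t + x) \<in> lebesgue \<rightarrow>\<^sub>M lebesgue"
  using lebesgue_affine_measurable[where c= "\<lambda>x::real. 1" and t=t] by force

theorem lemma8p1:
  fixes \<gamma> p :: real and f :: "real \<Rightarrow> real"
  assumes "\<gamma> < 0" and "1 \<le> p"
    and "f \<in> borel_measurable lebesgue"
    and "\<And>x. f x \<ge> 0"
    and "wLp_integral \<gamma> p f < \<infinity>"
  shows "Liminf at_bot (\<lambda>h. wLp_norm \<gamma> p (\<lambda>x. f x + transl h f x))
           \<ge> ereal (2 powr (1 / p)) * wLp_norm \<gamma> p f"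
proof -
  define w where "w = lp_weight \<gamma>"
  have wm[measurable]: "w \<in> borel_measurable lebesgue" unfolding w_def by (rule weight_meas)
  have fm[measurable]: "f \<in> borel_measurable lebesgue" by (rule assms(3))
  define I where "I = wLp_integral \<gamma> p f"
  obtain c where c: "I = ennreal c" "c \<ge> 0"
    using assms(5) unfolding I_def by (metis ennreal_cases less_irrefl top.not_eq_extremum infinity_ennreal_def)
  have key: "2 * I \<le> wLp_integral \<gamma> p (\<lambda>x. f x + transl h f x)" if h: "h \<le> 0" for h
  proof -
    have sm: "(\<lambda>x. x - h) \<in> lebesgue \<rightarrow>\<^sub>M lebesgue"
      using shift_meas[of "-h"] by simp
    have fsm[measurable]: "(\<lambda>x. f (x - h)) \<in> borel_measurable lebesgue"
      using measurable_compose[OF sm fm] by (simp add: o_def)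
    have wsm: "(\<lambda>y. y + h) \<in> lebesgue \<rightarrow>\<^sub>M lebesgue"
      using shift_meas[of "h"] by (simp add: add.commute)
    have wsm2[measurable]: "(\<lambda>y. w (y + h)) \<in> borel_measurable lebesgue"
      using measurable_compose[OF wsm wm] by (simp add: o_def)
    have "(\<integral>\<^sup>+y. ennreal (f y powr p * w (y + h)) \<partial>lebesgue)
        = ennreal \<bar>1\<bar> * (\<integral>\<^sup>+x. ennreal (f (-h + 1 * x) powr p * w ((-h + 1 * x) + h)) \<partial>lebesgue)"
      by (rule nn_integral_real_affine_lebesgue) auto
    also have "\<dots> = (\<integral>\<^sup>+x. ennreal (f (x - h) powr p * w x) \<partial>lebesgue)"
      by simp
    finally have sub: "(\<integral>\<^sup>+y. ennreal (f y powr p * w (y + h)) \<partial>lebesgue)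
        = (\<integral>\<^sup>+x. ennreal (f (x - h) powr p * w x) \<partial>lebesgue)" .
    have "I \<le> (\<integral>\<^sup>+y. ennreal (f y powr p * w (y + h)) \<partial>lebesgue)"
      unfolding I_def wLp_integral_def
    proof (rule nn_integral_mono)
      fix y
      have "lp_weight \<gamma> y \<le> w (y + h)" unfolding w_def
        using weight_anti[OF assms(1), of "y + h" y] h by simp
      then show "ennreal (\<bar>f y\<bar> powr p * lp_weight \<gamma> y) \<le> ennreal (f y powr p * w (y + h))"
        using assms(4)[of y] by (auto intro!: ennreal_leI mult_left_mono)
    qed
    then have IB: "I \<le> (\<integral>\<^sup>+x. ennreal (f (x - h) powr p * w x) \<partial>lebesgue)" using sub by simp
    have IA: "I = (\<integral>\<^sup>+x. ennreal (f x powr p * w x) \<partial>lebesgue)"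
      unfolding I_def wLp_integral_def w_def using assms(4) by simp
    have "2 * I = I + I" by (simp add: mult_2)
    also have "\<dots> \<le> (\<integral>\<^sup>+x. ennreal (f x powr p * w x) \<partial>lebesgue)
                   + (\<integral>\<^sup>+x. ennreal (f (x - h) powr p * w x) \<partial>lebesgue)"
      using IA IB by (intro add_mono) auto
    also have "\<dots> = (\<integral>\<^sup>+x. ennreal (f x powr p * w x) + ennreal (f (x - h) powr p * w x) \<partial>lebesgue)"
      by (rule nn_integral_add[symmetric]) auto
    also have "\<dots> \<le> wLp_integral \<gamma> p (\<lambda>x. f x + transl h f x)"
      unfolding wLp_integral_def
    proof (rule nn_integral_mono)
      fix x
      have a: "0 \<le> f x" "0 \<le> f (x - h)" using assms(4) by auto
      have wp: "0 \<le> w x" unfolding w_def using weight_pos less_imp_le by blast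
      have "f x powr p * w x + f (x - h) powr p * w x = (f x powr p + f (x - h) powr p) * w x"
        by (simp add: distrib_right)
      also have "\<dots> \<le> (f x + f (x - h)) powr p * w x"
        using powr_superadd[OF a assms(2)] wp by (rule mult_right_mono)
      finally have le: "f x powr p * w x + f (x - h) powr p * w x \<le> (f x + f (x - h)) powr p * w x" .
      have "ennreal (f x powr p * w x) + ennreal (f (x - h) powr p * w x)
          = ennreal (f x powr p * w x + f (x - h) powr p * w x)"
        using wp by (intro ennreal_plus[symmetric]) auto
      also have "\<dots> \<le> ennreal (\<bar>f x + transl h f x\<bar> powr p * lp_weight \<gamma> x)"
        using le a unfolding transl_def w_def by (intro ennreal_leI) simp
      finally show "ennreal (f x powr p * w x) + ennreal (f (x - h) powr p * w x)
          \<le> ennreal (\<bar>f x + transl h f x\<bar> powr p * lp_weight \<gamma> x)" .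
    qed
    finally show ?thesis .
  qed
  have normf: "wLp_norm \<gamma> p f = ereal (c powr (1/p))"
    unfolding wLp_norm_def using c I_def by simp
  have bound: "ereal (2 powr (1 / p)) * wLp_norm \<gamma> p f \<le> wLp_norm \<gamma> p (\<lambda>x. f x + transl h f x)"
    if h: "h \<le> 0" for h
  proof (cases "wLp_integral \<gamma> p (\<lambda>x. f x + transl h f x) = \<infinity>")
    case True
    then show ?thesis unfolding wLp_norm_def by simp
  next
    case False
    define J where "J = enn2real (wLp_integral \<gamma> p (\<lambda>x. f x + transl h f x))"
    have J: "wLp_integral \<gamma> p (\<lambda>x. f x + transl h f x) = ennreal J" "J \<ge> 0"
      using False unfolding J_def
      by (auto simp: ennreal_enn2real_if)
    have "ennreal (2 * c) \<le> ennreal J"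
      using key[OF h] c J by (simp add: ennreal_mult)
    then have cj: "2 * c \<le> J" using J by (simp add: ennreal_le_iff)
    have "2 powr (1/p) * c powr (1/p) = (2 * c) powr (1/p)" using c by (simp add: powr_mult)
    also have "\<dots> \<le> J powr (1/p)" using cj c assms(2) by (intro powr_mono2) auto
    finally have "2 powr (1/p) * c powr (1/p) \<le> J powr (1/p)" .
    then show ?thesis unfolding normf unfolding wLp_norm_def using False J_def by simp
  qed
  show ?thesis
    by (rule Liminf_bounded) (auto simp: eventually_at_bot_linorder intro!: exI[of _ 0] bound)
qed

end
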